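(* Let $P$ be an $n \times n$ partial Latin square with $r$ completely filled columns, one further column in which exactly $s$ cells are filled, and all other columns empty. If $n \geq 2r+s$, then $P$ is completable.
   Context: A partial Latin square of order $n$ is an $n\times n$ array in which each cell is empty or contains one symbol from $\{1,\dots,n\}$, with no symbol occurring twice in a row or column. $P$ is completable if there is an $n\times n$ Latin square (no empty cells) agreeing with $P$ on every nonempty cell of $P$. *)

theory Defs
  imports Main
begin

text \<open>A partial array of order n: P i j is the content of cell (row i, column j),
  None = empty. Only cells with i < n and j < n are relevant; symbols are 1..n.\<close>

definition partial_latin_square :: "nat \<Rightarrow> (nat \<Rightarrow> nat \<Rightarrow> nat option) \<Rightarrow> bool" where
  "partial_latin_square n P \<longleftrightarrow>
     (\<forall>i<n. \<forall>j<n. \<forall>x. P i j = Some x \<longrightarrow> x \<in> {1..n}) \<and>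
     (\<forall>i<n. \<forall>j<n. \<forall>j'<n. j \<noteq> j' \<and> P i j \<noteq> None \<longrightarrow> P i j \<noteq> P i j') \<and>
     (\<forall>j<n. \<forall>i<n. \<forall>i'<n. i \<noteq> i' \<and> P i j \<noteq> None \<longrightarrow> P i j \<noteq> P i' j)"

definition latin_square :: "nat \<Rightarrow> (nat \<Rightarrow> nat \<Rightarrow> nat option) \<Rightarrow> bool" where
  "latin_square n L \<longleftrightarrow> partial_latin_square n L \<and> (\<forall>i<n. \<forall>j<n. L i j \<noteq> None)"

definition completable :: "nat \<Rightarrow> (nat \<Rightarrow> nat \<Rightarrow> nat option) \<Rightarrow> bool" where
  "completable n P \<longleftrightarrow>
     (\<exists>L. latin_square n L \<and> (\<forall>i<n. \<forall>j<n. P i j \<noteq> None \<longrightarrow> L i j = P i j))"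

definition filled_in_col :: "nat \<Rightarrow> (nat \<Rightarrow> nat \<Rightarrow> nat option) \<Rightarrow> nat \<Rightarrow> nat" where
  "filled_in_col n P j = card {i. i < n \<and> P i j \<noteq> None}"

end

theory Submission
  imports Defs
begin


lemma hall:
  assumes "finite I" "\<forall>i\<in>I. finite (A i)" "\<forall>J\<subseteq>I. card J \<le> card (\<Union>(A ` J))"
  shows "\<exists>f. inj_on f I \<and> (\<forall>i\<in>I. f i \<in> A i)"
  using assms
proof (induct "card I" arbitrary: I A rule: less_induct)
  case less
  note fin = less.prems(1) and finA = less.prems(2) and H = less.prems(3)
  show ?case
  proof (cases "I = {}")
    case True then show ?thesis by auto
  next
    case ne: False
    show ?thesis
    proof (cases "\<exists>J. J \<subseteq> I \<and> J \<noteq> {} \<and> J \<noteq> I \<and> card (\<Union>(A ` J)) \<le> card J")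
      case True
      then obtain J where J: "J \<subseteq> I" "J \<noteq> {}" "J \<noteq> I" "card (\<Union>(A ` J)) \<le> card J" by blast
      define U where "U = \<Union>(A ` J)"
      have finJ: "finite J" using J(1) fin finite_subset by blast
      have finU: "finite U" unfolding U_def using finJ finA J(1) by auto
      have cU: "card U = card J" using J(4) H J(1) unfolding U_def by (simp add: le_antisym)
      have "card J < card I" using J fin by (simp add: psubset_card_mono psubsetI)
      moreover have "\<forall>K\<subseteq>J. card K \<le> card (\<Union>(A ` K))" using H J(1) by blast
      ultimately obtain f1 where f1: "inj_on f1 J" "\<forall>i\<in>J. f1 i \<in> A i"
        using less.hyps[of J A] finJ finA J(1) by blast
      define A' where "A' = (\<lambda>i. A i - U)"
      have "card (I - J) < card I" using J fin
        by (metis Diff_subset card_Diff_subset card_gt_0_iff diff_less finJ finite_subset subset_empty)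
      moreover have "\<forall>K\<subseteq>I - J. card K \<le> card (\<Union>(A' ` K))"
      proof (intro allI impI)
        fix K assume K: "K \<subseteq> I - J"
        have finK: "finite K" using K fin finite_subset by blast
        have "card K + card J = card (K \<union> J)" using K finK finJ
          by (metis Diff_disjoint card_Un_disjoint disjoint_iff subsetD)
        also have "\<dots> \<le> card (\<Union>(A ` (K \<union> J)))" apply (rule H[rule_format]) using K J(1) by auto
        also have "\<Union>(A ` (K \<union> J)) \<subseteq> \<Union>(A' ` K) \<union> U" unfolding A'_def U_def by auto
        hence "card (\<Union>(A ` (K \<union> J))) \<le> card (\<Union>(A' ` K) \<union> U)"
          apply (rule card_mono[rotated]) using finK finA K finU unfolding A'_def by auto
        also have "\<dots> \<le> card (\<Union>(A' ` K)) + card U" by (rule card_Un_le)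
        finally show "card K \<le> card (\<Union>(A' ` K))" using cU by simp
      qed
      ultimately obtain f2 where f2: "inj_on f2 (I - J)" "\<forall>i\<in>I - J. f2 i \<in> A' i"
        using less.hyps[of "I - J" A'] fin finA unfolding A'_def by auto
      define f where "f = (\<lambda>i. if i \<in> J then f1 i else f2 i)"
      have "inj_on f I"
        unfolding inj_on_def f_def using f1 f2 unfolding A'_def U_def inj_on_def
        by (smt (verit, ccfv_SIG) DiffD2 DiffI UN_I)
      moreover have "\<forall>i\<in>I. f i \<in> A i" using f1 f2 unfolding f_def A'_def by auto
      ultimately show ?thesis by blast
    next
      case False
      hence strict: "\<And>J. J \<subseteq> I \<Longrightarrow> J \<noteq> {} \<Longrightarrow> J \<noteq> I \<Longrightarrow> card J < card (\<Union>(A ` J))"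
        by (meson not_le)
      obtain i0 where i0: "i0 \<in> I" using ne by blast
      have "card {i0} \<le> card (A i0)" using H i0 by (metis ccpo_Sup_singleton empty_subsetI image_empty image_insert insert_subset)
      hence "A i0 \<noteq> {}" by auto
      then obtain x where x: "x \<in> A i0" by blast
      define A' where "A' = (\<lambda>i. A i - {x})"
      have "card (I - {i0}) < card I" using fin i0 by (metis card_Diff1_less)
      moreover have "\<forall>K\<subseteq>I - {i0}. card K \<le> card (\<Union>(A' ` K))"
      proof (intro allI impI)
        fix K assume K: "K \<subseteq> I - {i0}"
        show "card K \<le> card (\<Union>(A' ` K))"
        proof (cases "K = {}")
          case True then show ?thesis by simp
        next
          case False
          have finK: "finite K" using K fin finite_subset by blast
          have "K \<noteq> I" using K i0 by blast
          hence lt: "card K < card (\<Union>(A ` K))" using strict[of K] K False by blast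
          have eq: "\<Union>(A' ` K) = \<Union>(A ` K) - {x}" unfolding A'_def by auto
          have "card (\<Union>(A ` K)) - 1 \<le> card (\<Union>(A ` K) - {x})" using diff_card_le_card_Diff[of "{x}" "\<Union>(A ` K)"] by simp
          then show ?thesis using lt unfolding eq by linarith
        qed
      qed
      ultimately obtain f' where f': "inj_on f' (I - {i0})" "\<forall>i\<in>I - {i0}. f' i \<in> A' i"
        using less.hyps[of "I - {i0}" A'] fin finA unfolding A'_def by auto
      define f where "f = f'(i0 := x)"
      have "inj_on f I" unfolding f_def using f' unfolding A'_def inj_on_def
        by (smt (verit, best) Diff_iff fun_upd_apply insertI1 singletonD)
      moreover have "\<forall>i\<in>I. f i \<in> A i" using f' x unfolding f_def A'_def by auto
      ultimately show ?thesis by blast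
    qed
  qed
qed



lemma upd_pls:
  assumes P: "partial_latin_square n P" and j0: "j0 < n" and E: "E \<subseteq> {..<n}"
    and Enone: "\<forall>i\<in>E. P i j0 = None"
    and inj: "inj_on f E"
    and fr: "\<forall>i\<in>E. f i \<in> {1..n}"
    and frow: "\<forall>i\<in>E. \<forall>j<n. P i j \<noteq> Some (f i)"
    and fcol: "\<forall>i\<in>E. \<forall>i'<n. P i' j0 \<noteq> Some (f i)"
  shows "partial_latin_square n (\<lambda>i j. if j = j0 \<and> i \<in> E then Some (f i) else P i j)"
proof -
  have p1: "\<forall>i<n. \<forall>j<n. \<forall>x. P i j = Some x \<longrightarrow> x \<in> {1..n}"
   and p2: "\<forall>i<n. \<forall>j<n. \<forall>j'<n. j \<noteq> j' \<and> P i j \<noteq> None \<longrightarrow> P i j \<noteq> P i j'"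
   and p3: "\<forall>j<n. \<forall>i<n. \<forall>i'<n. i \<noteq> i' \<and> P i j \<noteq> None \<longrightarrow> P i j \<noteq> P i' j"
    using P unfolding partial_latin_square_def by blast+
  show ?thesis unfolding partial_latin_square_def
  proof (intro conjI allI impI)
    fix i j x
    assume "i < n" "j < n" "(if j = j0 \<and> i \<in> E then Some (f i) else P i j) = Some x"
    then show "x \<in> {1..n}" using fr p1 by (auto split: if_splits)
  next
    fix i j j'
    assume h: "i < n" "j < n" "j' < n" "j \<noteq> j' \<and> (if j = j0 \<and> i \<in> E then Some (f i) else P i j) \<noteq> None"
    then show "(if j = j0 \<and> i \<in> E then Some (f i) else P i j) \<noteq> (if j' = j0 \<and> i \<in> E then Some (f i) else P i j')"
      using frow p2 by (auto split: if_splits) (metis)+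
  next
    fix j i i'
    assume h: "j < n" "i < n" "i' < n" "i \<noteq> i' \<and> (if j = j0 \<and> i \<in> E then Some (f i) else P i j) \<noteq> None"
    then show "(if j = j0 \<and> i \<in> E then Some (f i) else P i j) \<noteq> (if j = j0 \<and> i' \<in> E then Some (f i') else P i' j)"
      using fcol inj Enone p3 unfolding inj_on_def by (auto split: if_splits) (metis)+
  qed
qed

lemma col_surj:
  assumes P: "partial_latin_square n P" and j: "j < n" and full: "\<forall>i<n. P i j \<noteq> None"
    and x: "x \<in> {1..n}"
  shows "\<exists>i<n. P i j = Some x"
proof -
  define g where "g = (\<lambda>i. the (P i j))"
  have inj: "inj_on g {..<n}" unfolding inj_on_def g_def
  proof (intro ballI impI)
    fix a b assume "a \<in> {..<n}" "b \<in> {..<n}" "the (P a j) = the (P b j)"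
    then show "a = b" using P full j unfolding partial_latin_square_def
      by (metis lessThan_iff option.expand)
  qed
  have sub: "g ` {..<n} \<subseteq> {1..n}" using P full j unfolding partial_latin_square_def g_def by force
  have "card (g ` {..<n}) = card {1..n}" using inj by (simp add: card_image)
  hence "g ` {..<n} = {1..n}" using sub by (simp add: card_subset_eq)
  then obtain i where "i < n" "g i = x" using x by (metis imageE lessThan_iff)
  then show ?thesis using full unfolding g_def by force
qed



lemma extend_col:
  assumes P: "partial_latin_square n P" and D: "D \<subseteq> {..<n}"
    and full: "\<forall>j\<in>D. \<forall>i<n. P i j \<noteq> None"
    and empty: "\<forall>j<n. j \<notin> D \<longrightarrow> (\<forall>i<n. P i j = None)"
    and j0: "j0 < n" "j0 \<notin> D"
  shows "\<exists>Q. partial_latin_square n Q \<and> (\<forall>i<n. \<forall>j<n. P i j \<noteq> None \<longrightarrow> Q i j = P i j)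
     \<and> (\<forall>j\<in>insert j0 D. \<forall>i<n. Q i j \<noteq> None)
     \<and> (\<forall>j<n. j \<notin> insert j0 D \<longrightarrow> (\<forall>i<n. Q i j = None))"
proof -
  define k where "k = card D"
  have finD: "finite D" using D finite_subset by blast
  have "D \<subset> {..<n}" using D j0 by blast
  hence kn: "k < n" unfolding k_def by (metis card_lessThan psubset_card_mono finite_lessThan)
  define R where "R = (\<lambda>i. {x. \<exists>j<n. P i j = Some x})"
  define A where "A = (\<lambda>i. {1..n} - R i)"
  have RD: "R i \<subseteq> (\<lambda>j. the (P i j)) ` D" if "i < n" for i
  proof
    fix x assume "x \<in> R i"
    then obtain j where "j < n" "P i j = Some x" unfolding R_def by blast
    moreover then have "j \<in> D" using empty that by (metis option.distinct(1))
    ultimately show "x \<in> (\<lambda>j. the (P i j)) ` D" by force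
  qed
  have cardA: "card (A i) \<ge> n - k" if "i < n" for i
  proof -
    have "card (R i) \<le> k" unfolding k_def using RD[OF that] finD
      by (meson card_image_le card_mono finite_imageI order_trans)
    moreover have "finite (R i)" using RD[OF that] finD finite_subset by blast
    moreover have "card {1..n} - card (R i) \<le> card (A i)" unfolding A_def
      using diff_card_le_card_Diff[of "R i" "{1..n}"] calculation(2) by simp
    ultimately show ?thesis by simp
  qed
  have cardX: "card {i. i < n \<and> x \<in> A i} \<le> n - k" if x: "x \<in> {1..n}" for x
  proof -
    define X where "X = {i. i < n \<and> x \<in> R i}"
    define h where "h = (\<lambda>j. SOME i. i < n \<and> P i j = Some x)"
    have hD: "h j < n \<and> P (h j) j = Some x" if "j \<in> D" for j
    proof -
      have "\<exists>i<n. P i j = Some x" using col_surj[OF P _ _ x, of j] full that D by blast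
      then show ?thesis unfolding h_def by (metis (mono_tags, lifting) someI_ex)
    qed
    have injh: "inj_on h D"
    proof (rule inj_onI)
      fix a b assume ab: "a \<in> D" "b \<in> D" "h a = h b"
      show "a = b"
      proof (rule ccontr)
        assume "a \<noteq> b"
        then show False using P hD[OF ab(1)] hD[OF ab(2)] ab D unfolding partial_latin_square_def
          by (metis lessThan_iff option.distinct(1) subsetD)
      qed
    qed
    have "h ` D \<subseteq> X" unfolding X_def R_def using hD D by blast
    hence "k \<le> card X" unfolding k_def using injh
      by (metis card_image card_mono finite_Collect_conjI finite_lessThan lessThan_def X_def)
    moreover have "{i. i < n \<and> x \<in> A i} = {..<n} - X" unfolding X_def A_def using x by auto
    moreover have "X \<subseteq> {..<n}" unfolding X_def by auto
    ultimately show ?thesis by (simp add: card_Diff_subset finite_subset)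
  qed
  have hallc: "\<forall>J\<subseteq>{..<n}. card J \<le> card (\<Union>(A ` J))"
  proof (intro allI impI)
    fix J assume J: "J \<subseteq> {..<n}"
    define N where "N = \<Union>(A ` J)"
    have finJ: "finite J" using J finite_subset by blast
    have NS: "N \<subseteq> {1..n}" unfolding N_def A_def by auto
    have finN: "finite N" using NS finite_subset by blast
    have "card J * (n - k) \<le> (\<Sum>i\<in>J. card (A i))"
      using cardA J sum_mono[of J "\<lambda>_. n - k" "\<lambda>i. card (A i)"] by auto
    also have "\<dots> = card (Sigma J A)" using finJ by (simp add: card_SigmaI A_def)
    also have "\<dots> \<le> card (Sigma N (\<lambda>x. {i. i < n \<and> x \<in> A i}))"
    proof (rule card_inj_on_le[of prod.swap])
      show "inj_on prod.swap (Sigma J A)" by (simp add: inj_on_def)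
      show "prod.swap ` Sigma J A \<subseteq> Sigma N (\<lambda>x. {i. i < n \<and> x \<in> A i})" unfolding N_def using J by auto
      show "finite (Sigma N (\<lambda>x. {i. i < n \<and> x \<in> A i}))" using finN by (simp add: finite_SigmaI)
    qed
    also have "\<dots> = (\<Sum>x\<in>N. card {i. i < n \<and> x \<in> A i})" using finN by (simp add: card_SigmaI)
    also have "\<dots> \<le> card N * (n - k)"
      using cardX NS sum_mono[of N "\<lambda>x. card {i. i < n \<and> x \<in> A i}" "\<lambda>_. n - k"] by (simp add: subset_iff)
    finally have "card J * (n - k) \<le> card N * (n - k)" .
    then show "card J \<le> card (\<Union>(A ` J))" using kn unfolding N_def by simp
  qed
  obtain f where f: "inj_on f {..<n}" "\<forall>i\<in>{..<n}. f i \<in> A i"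
    using hall[OF _ _ hallc] unfolding A_def by auto
  define Q where "Q = (\<lambda>i j. if j = j0 \<and> i \<in> {..<n} then Some (f i) else P i j)"
  have "partial_latin_square n Q" unfolding Q_def
  proof (rule upd_pls[OF P j0(1)])
    show "\<forall>i\<in>{..<n}. P i j0 = None" using empty j0 by auto
    show "\<forall>i\<in>{..<n}. f i \<in> {1..n}" using f unfolding A_def by auto
    show "\<forall>i\<in>{..<n}. \<forall>j<n. P i j \<noteq> Some (f i)" using f unfolding A_def R_def by auto
    show "\<forall>i\<in>{..<n}. \<forall>i'<n. P i' j0 \<noteq> Some (f i)" using empty j0 by auto
  qed (use f in auto)
  moreover have "\<forall>i<n. \<forall>j<n. P i j \<noteq> None \<longrightarrow> Q i j = P i j" unfolding Q_def using empty j0 by auto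
  moreover have "\<forall>j\<in>insert j0 D. \<forall>i<n. Q i j \<noteq> None" unfolding Q_def using full by auto
  moreover have "\<forall>j<n. j \<notin> insert j0 D \<longrightarrow> (\<forall>i<n. Q i j = None)" unfolding Q_def using empty by auto
  ultimately show ?thesis by blast
qed

lemma complete_from:
  "partial_latin_square n P \<Longrightarrow> D \<subseteq> {..<n} \<Longrightarrow> \<forall>j\<in>D. \<forall>i<n. P i j \<noteq> None \<Longrightarrow>
   \<forall>j<n. j \<notin> D \<longrightarrow> (\<forall>i<n. P i j = None) \<Longrightarrow> completable n P"
proof (induct "n - card D" arbitrary: D P rule: less_induct)
  case less
  show ?case
  proof (cases "D = {..<n}")
    case True
    then have "latin_square n P" using less.prems unfolding latin_square_def by auto
    then show ?thesis unfolding completable_def by blast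
  next
    case False
    then obtain j0 where j0: "j0 < n" "j0 \<notin> D" using less.prems(2) by blast
    obtain Q where Q: "partial_latin_square n Q" "\<forall>i<n. \<forall>j<n. P i j \<noteq> None \<longrightarrow> Q i j = P i j"
      "\<forall>j\<in>insert j0 D. \<forall>i<n. Q i j \<noteq> None" "\<forall>j<n. j \<notin> insert j0 D \<longrightarrow> (\<forall>i<n. Q i j = None)"
      using extend_col[OF less.prems j0] by blast
    have finD: "finite D" using less.prems(2) finite_subset by blast
    have "card (insert j0 D) \<le> n" using less.prems(2) j0
      by (metis card_lessThan card_mono finite_lessThan insert_subset lessThan_iff)
    hence "n - card (insert j0 D) < n - card D" using finD j0 by simp
    then have "completable n Q" using less.hyps Q less.prems(2) j0 by auto
    then show ?thesis using Q(2) unfolding completable_def by metis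
  qed
qed



theorem lemma2:
  fixes n r s c :: nat and C :: "nat set" and P :: "nat \<Rightarrow> nat \<Rightarrow> nat option"
  assumes "partial_latin_square n P"
    and "C \<subseteq> {..<n}" and "card C = r"
    and "c < n" and "c \<notin> C"
    and "\<forall>j\<in>C. \<forall>i<n. P i j \<noteq> None"
    and "filled_in_col n P c = s"
    and "\<forall>j<n. j \<notin> C \<and> j \<noteq> c \<longrightarrow> (\<forall>i<n. P i j = None)"
    and "n \<ge> 2 * r + s"
  shows "completable n P"
proof -
  note P = assms(1) and CS = assms(2) and cC = assms(3) and c = assms(4) assms(5)
    and full = assms(6) and empty = assms(8) and nge = assms(9)
  have finC: "finite C" using CS finite_subset by blast
  define E where "E = {i. i < n \<and> P i c = None}"
  define F where "F = {i. i < n \<and> P i c \<noteq> None}"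
  have cF: "card F = s" using assms(7) unfolding filled_in_col_def F_def by simp
  have EF: "E = {..<n} - F" unfolding E_def F_def by auto
  have Fsub: "F \<subseteq> {..<n}" unfolding F_def by auto
  have finF: "finite F" using Fsub finite_subset by blast
  have cE: "card E = n - s" unfolding EF using cF card_Diff_subset[OF finF Fsub] by simp
  have Esub: "E \<subseteq> {..<n}" unfolding E_def by auto
  define S where "S = {x. \<exists>i<n. P i c = Some x}"
  have "S \<subseteq> (\<lambda>i. the (P i c)) ` F" unfolding S_def F_def by force
  hence "card S \<le> card ((\<lambda>i. the (P i c)) ` F)" using finF by (simp add: card_mono)
  hence cS: "card S \<le> s" using cF card_image_le[OF finF, of "\<lambda>i. the (P i c)"] by linarith
  have finS: "finite S" using finite_subset[OF \<open>S \<subseteq> _\<close>] finF by blast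
  define R where "R = (\<lambda>i. {x. \<exists>j<n. P i j = Some x})"
  define A where "A = (\<lambda>i. {1..n} - R i - S)"
  have RC: "R i \<subseteq> (\<lambda>j. the (P i j)) ` C" if "i \<in> E" for i
  proof
    fix x assume "x \<in> R i"
    then obtain j where "j < n" "P i j = Some x" unfolding R_def by blast
    moreover have "j \<noteq> c" using that \<open>P i j = Some x\<close> unfolding E_def by auto
    moreover have "i < n" using that unfolding E_def by auto
    ultimately have "j \<in> C" using empty by force
    with \<open>P i j = Some x\<close> show "x \<in> (\<lambda>j. the (P i j)) ` C" by force
  qed
  define d where "d = n - s - r"
  have cardA: "card (A i) \<ge> d" if "i \<in> E" for i
  proof -
    have "card (R i) \<le> r" using RC[OF that] finC cC
      by (meson card_image_le card_mono finite_imageI order_trans)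
    moreover have "finite (R i)" using RC[OF that] finC finite_subset by blast
    moreover have "card {1..n} - card (R i \<union> S) \<le> card (A i)" unfolding A_def
      using diff_card_le_card_Diff[of "R i \<union> S" "{1..n}"] calculation(2) finS by (simp add: Diff_Un Diff_Int_distrib2 set_diff_eq)
    moreover have "card (R i \<union> S) \<le> card (R i) + card S" by (rule card_Un_le)
    ultimately show ?thesis unfolding d_def using cS by simp
  qed
  have cardX: "card {i \<in> E. x \<in> A i} \<ge> d" if x: "x \<in> {1..n} - S" for x
  proof -
    have sub: "{i \<in> E. x \<notin> A i} \<subseteq> (\<Union>j\<in>C. {i. i < n \<and> P i j = Some x})"
    proof
      fix i assume "i \<in> {i \<in> E. x \<notin> A i}"
      then have i: "i \<in> E" "x \<in> R i" using x unfolding A_def by auto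
      then obtain j where "j < n" "P i j = Some x" unfolding R_def by blast
      moreover have "j \<noteq> c" "i < n" using i \<open>P i j = Some x\<close> unfolding E_def by auto
      ultimately have "j \<in> C" "j < n" "P i j = Some x" using empty by force+
      then show "i \<in> (\<Union>j\<in>C. {i. i < n \<and> P i j = Some x})" using i E_def by auto
    qed
    have one: "card {i. i < n \<and> P i j = Some x} \<le> 1" if "j \<in> C" for j
    proof -
      have "\<forall>a\<in>{i. i < n \<and> P i j = Some x}. \<forall>b\<in>{i. i < n \<and> P i j = Some x}. a = b"
      proof (intro ballI)
        fix a b assume a: "a \<in> {i. i < n \<and> P i j = Some x}" and b: "b \<in> {i. i < n \<and> P i j = Some x}"
        have "j < n" using that CS by auto
        show "a = b"
        proof (rule ccontr)
          assume "a \<noteq> b"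
          have col: "\<forall>j<n. \<forall>i<n. \<forall>i'<n. i \<noteq> i' \<and> P i j \<noteq> None \<longrightarrow> P i j \<noteq> P i' j"
            using P unfolding partial_latin_square_def by blast
          from col \<open>j < n\<close> have "\<forall>i<n. \<forall>i'<n. i \<noteq> i' \<and> P i j \<noteq> None \<longrightarrow> P i j \<noteq> P i' j" by blast
          then have "a \<noteq> b \<and> P a j \<noteq> None \<longrightarrow> P a j \<noteq> P b j" using a b by blast
          then have "P a j \<noteq> P b j" using a b \<open>a \<noteq> b\<close> by simp
          then show False using a b by auto
        qed
      qed
      then show ?thesis by (simp add: card_le_Suc0_iff_eq)
    qed
    have "card (\<Union>j\<in>C. {i. i < n \<and> P i j = Some x}) \<le> (\<Sum>j\<in>C. card {i. i < n \<and> P i j = Some x})"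
      using finC by (rule card_UN_le)
    also have "\<dots> \<le> (\<Sum>j\<in>C. 1)" using one by (rule sum_mono)
    also have "\<dots> = r" using cC by simp
    finally have U: "card (\<Union>j\<in>C. {i. i < n \<and> P i j = Some x}) \<le> r" .
    have "finite (\<Union>j\<in>C. {i. i < n \<and> P i j = Some x})" using finC by auto
    hence "card {i \<in> E. x \<notin> A i} \<le> card (\<Union>j\<in>C. {i. i < n \<and> P i j = Some x})" using sub by (rule card_mono)
    hence "card {i \<in> E. x \<notin> A i} \<le> r" using U by linarith
    moreover have "{i \<in> E. x \<in> A i} = E - {i \<in> E. x \<notin> A i}" by auto
    moreover have "finite E" using Esub finite_subset by blast
    moreover have "card (E - {i \<in> E. x \<notin> A i}) = card E - card {i \<in> E. x \<notin> A i}"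
      using calculation(3) by (intro card_Diff_subset) auto
    ultimately show ?thesis unfolding d_def using cE by simp
  qed
  have hallc: "\<forall>J\<subseteq>E. card J \<le> card (\<Union>(A ` J))"
  proof (intro allI impI)
    fix J assume J: "J \<subseteq> E"
    have finE: "finite E" using Esub finite_subset by blast
    have finJ: "finite J" using J finE finite_subset by blast
    have finN: "finite (\<Union>(A ` J))" unfolding A_def by auto
    show "card J \<le> card (\<Union>(A ` J))"
    proof (cases "card J \<le> d")
      case True
      show ?thesis
      proof (cases "J = {}")
        case True then show ?thesis by simp
      next
        case False
        then obtain i where i: "i \<in> J" by blast
        have "card (A i) \<le> card (\<Union>(A ` J))" using i finN by (meson UN_upper card_mono)
        then show ?thesis using cardA[of i] i J True by auto
      qed
    next
      case False
      have "{1..n} - S \<subseteq> \<Union>(A ` J)"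
      proof
        fix x assume x: "x \<in> {1..n} - S"
        show "x \<in> \<Union>(A ` J)"
        proof (rule ccontr)
          assume "x \<notin> \<Union>(A ` J)"
          hence disj: "J \<inter> {i \<in> E. x \<in> A i} = {}" by auto
          have "J \<union> {i \<in> E. x \<in> A i} \<subseteq> E" using J by auto
          hence "card (J \<union> {i \<in> E. x \<in> A i}) \<le> n - s" using cE finE card_mono by metis
          moreover have "card (J \<union> {i \<in> E. x \<in> A i}) = card J + card {i \<in> E. x \<in> A i}"
            using disj finJ finE by (simp add: card_Un_disjoint)
          ultimately show False using cardX[OF x] False nge unfolding d_def by linarith
        qed
      qed
      hence "card ({1..n} - S) \<le> card (\<Union>(A ` J))" using finN by (rule card_mono[rotated])
      moreover have "n - s \<le> card ({1..n} - S)"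
        using diff_card_le_card_Diff[of S "{1..n}"] cS
        using finS by simp
      moreover have "card J \<le> n - s" using J cE finE by (metis card_mono)
      ultimately show ?thesis by linarith
    qed
  qed
  have finE: "finite E" using Esub finite_subset by blast
  obtain f where f: "inj_on f E" "\<forall>i\<in>E. f i \<in> A i"
    using hall[OF finE _ hallc] unfolding A_def by auto
  define Q where "Q = (\<lambda>i j. if j = c \<and> i \<in> E then Some (f i) else P i j)"
  have Qp: "partial_latin_square n Q" unfolding Q_def
  proof (rule upd_pls[OF P c(1) Esub])
    show "\<forall>i\<in>E. P i c = None" unfolding E_def by auto
    show "\<forall>i\<in>E. f i \<in> {1..n}" using f unfolding A_def by auto
    show "\<forall>i\<in>E. \<forall>j<n. P i j \<noteq> Some (f i)" using f unfolding A_def R_def by auto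
    show "\<forall>i\<in>E. \<forall>i'<n. P i' c \<noteq> Some (f i)" using f unfolding A_def S_def by auto
  qed (use f in auto)
  have ext: "\<forall>i<n. \<forall>j<n. P i j \<noteq> None \<longrightarrow> Q i j = P i j" unfolding Q_def E_def by auto
  have "completable n Q"
  proof (rule complete_from[OF Qp, of "insert c C"])
    show "insert c C \<subseteq> {..<n}" using CS c by auto
    show "\<forall>j\<in>insert c C. \<forall>i<n. Q i j \<noteq> None" unfolding Q_def E_def using full c by auto
    show "\<forall>j<n. j \<notin> insert c C \<longrightarrow> (\<forall>i<n. Q i j = None)" unfolding Q_def using empty by auto
  qed
  then show ?thesis using ext unfolding completable_def by metis
qed

end
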